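(* Let $H$ be a Hilbert space of holomorphic functions on the unit disk $\mathbb D$ such that norm convergence in $H$ implies pointwise convergence on $\mathbb D$ and $H$ contains the polynomials. Let $K(z,w)$ be its reproducing kernel and, for $j\ge0$, $k_{0,j}(z):=\frac1{j!}\frac{\partial^j}{\partial\overline w^j}K(z,w)\big|_{w=0}$. For $\alpha\ge0$ and $h\in H$ with Taylor coefficients $\hat h(j)$, let $\sigma_n^\alpha(h):=\sum_{j=0}^n\binom{n}{j}\big/\binom{n+\alpha}{j}\,\hat h(j)z^j$. If $\sigma_n^\alpha(h)\to h$ (weakly or in norm) in $H$ for all $h\in H$, then \[ \|z^j\|_H\,\|k_{0,j}\|_H=O(j^\alpha)\quad(j\to\infty). \]
   Context: The reproducing kernel is $K(z,w)=k_w(z)$ where $k_w\in H$ satisfies $h(w)=\langle h,k_w\rangle$ for all $h\in H$. Binomial coefficients with non-integer arguments are defined via the Gamma function. *)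

theory Defs
  imports "HOL-Analysis.Analysis" "HOL-Library.Landau_Symbols"
begin

text \<open>A Hilbert space of holomorphic functions on the unit disk is modelled as a set
  H of functions complex => complex (each holomorphic on the open unit disk and, as a
  canonical representative, equal to 0 off the disk) together with an inner product ip
  which is linear in the first and conjugate-linear in the second argument.\<close>

definition hnorm :: "((complex \<Rightarrow> complex) \<Rightarrow> (complex \<Rightarrow> complex) \<Rightarrow> complex)
    \<Rightarrow> (complex \<Rightarrow> complex) \<Rightarrow> real" where
  "hnorm ip f = sqrt (Re (ip f f))"

definition hol_hilbert_space ::
  "(complex \<Rightarrow> complex) set \<Rightarrow> ((complex \<Rightarrow> complex) \<Rightarrow> (complex \<Rightarrow> complex) \<Rightarrow> complex) \<Rightarrow> bool"
  where
  "hol_hilbert_space H ip \<longleftrightarrow>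
     (\<forall>f\<in>H. f holomorphic_on ball 0 1 \<and> (\<forall>z. z \<notin> ball 0 1 \<longrightarrow> f z = 0)) \<and>
     (\<lambda>z. 0) \<in> H \<and>
     (\<forall>f\<in>H. \<forall>g\<in>H. (\<lambda>z. f z + g z) \<in> H) \<and>
     (\<forall>f\<in>H. \<forall>c. (\<lambda>z. c * f z) \<in> H) \<and>
     (\<forall>f\<in>H. \<forall>g\<in>H. \<forall>h\<in>H. ip (\<lambda>z. f z + g z) h = ip f h + ip g h) \<and>
     (\<forall>f\<in>H. \<forall>h\<in>H. \<forall>c. ip (\<lambda>z. c * f z) h = c * ip f h) \<and>
     (\<forall>f\<in>H. \<forall>g\<in>H. ip g f = cnj (ip f g)) \<and>
     (\<forall>f\<in>H. 0 \<le> Re (ip f f)) \<and>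
     (\<forall>f\<in>H. ip f f = 0 \<longrightarrow> f = (\<lambda>z. 0)) \<and>
     (\<forall>s. (\<forall>n. s n \<in> H) \<and>
          (\<forall>e>0. \<exists>N. \<forall>m\<ge>N. \<forall>n\<ge>N. hnorm ip (\<lambda>z. s m z - s n z) < e)
          \<longrightarrow> (\<exists>f\<in>H. (\<lambda>n. hnorm ip (\<lambda>z. s n z - f z)) \<longlonglongrightarrow> 0))"

definition norm_conv_implies_pointwise ::
  "(complex \<Rightarrow> complex) set \<Rightarrow> ((complex \<Rightarrow> complex) \<Rightarrow> (complex \<Rightarrow> complex) \<Rightarrow> complex) \<Rightarrow> bool"
  where
  "norm_conv_implies_pointwise H ip \<longleftrightarrow>
     (\<forall>s f. (\<forall>n. s n \<in> H) \<and> f \<in> H \<and> (\<lambda>n. hnorm ip (\<lambda>z. s n z - f z)) \<longlonglongrightarrow> 0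
        \<longrightarrow> (\<forall>z\<in>ball 0 1. (\<lambda>n. s n z) \<longlonglongrightarrow> f z))"

definition dmon :: "nat \<Rightarrow> complex \<Rightarrow> complex" where
  "dmon j = (\<lambda>z. if z \<in> ball 0 1 then z ^ j else 0)"

definition is_repr_kernel ::
  "(complex \<Rightarrow> complex) set \<Rightarrow> ((complex \<Rightarrow> complex) \<Rightarrow> (complex \<Rightarrow> complex) \<Rightarrow> complex)
     \<Rightarrow> (complex \<Rightarrow> complex \<Rightarrow> complex) \<Rightarrow> bool" where
  "is_repr_kernel H ip K \<longleftrightarrow>
     (\<forall>w\<in>ball 0 1. (\<lambda>z. K z w) \<in> H \<and> (\<forall>h\<in>H. h w = ip h (\<lambda>z. K z w)))"

definition taylor_coeff :: "(complex \<Rightarrow> complex) \<Rightarrow> nat \<Rightarrow> complex" where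
  "taylor_coeff h j = (deriv ^^ j) h 0 / fact j"

text \<open>k_{0,j}(z) = (1/j!) d^j/d(conj w)^j K(z,w) at w = 0. Since w \<mapsto> K(z,w) is
  antiholomorphic, this is conj of the j-th complex derivative of w \<mapsto> conj (K z w) at 0.\<close>
definition kder :: "(complex \<Rightarrow> complex \<Rightarrow> complex) \<Rightarrow> nat \<Rightarrow> complex \<Rightarrow> complex" where
  "kder K j = (\<lambda>z. cnj ((deriv ^^ j) (\<lambda>w. cnj (K z w)) 0) / fact j)"

definition cesaro :: "real \<Rightarrow> nat \<Rightarrow> (complex \<Rightarrow> complex) \<Rightarrow> complex \<Rightarrow> complex" where
  "cesaro \<alpha> n h = (\<lambda>z. if z \<in> ball 0 1 then
      (\<Sum>j=0..n. complex_of_real (real (n choose j) / ((real n + \<alpha>) gchoose j))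
                  * taylor_coeff h j * z ^ j)
      else 0)"

end

theory Submission
  imports Defs "HOL-Complex_Analysis.Cauchy_Integral_Formula"
begin

definition fadd :: "(complex \<Rightarrow> complex) \<Rightarrow> (complex \<Rightarrow> complex) \<Rightarrow> complex \<Rightarrow> complex"
  where "fadd f g = (\<lambda>z. f z + g z)"
definition fsub :: "(complex \<Rightarrow> complex) \<Rightarrow> (complex \<Rightarrow> complex) \<Rightarrow> complex \<Rightarrow> complex"
  where "fsub f g = (\<lambda>z. f z - g z)"
definition fscale :: "complex \<Rightarrow> (complex \<Rightarrow> complex) \<Rightarrow> complex \<Rightarrow> complex"
  where "fscale c f = (\<lambda>z. c * f z)"

locale hs =
  fixes H :: "(complex \<Rightarrow> complex) set"
    and ip :: "(complex \<Rightarrow> complex) \<Rightarrow> (complex \<Rightarrow> complex) \<Rightarrow> complex"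
  assumes hs: "hol_hilbert_space H ip"
begin

abbreviation nrm where "nrm \<equiv> hnorm ip"

lemma zero_in[simp]: "(\<lambda>z. 0) \<in> H" using hs unfolding hol_hilbert_space_def by blast
lemma add_in[simp]: "f \<in> H \<Longrightarrow> g \<in> H \<Longrightarrow> fadd f g \<in> H"
  using hs unfolding hol_hilbert_space_def fadd_def by blast
lemma scale_in[simp]: "f \<in> H \<Longrightarrow> fscale c f \<in> H"
  using hs unfolding hol_hilbert_space_def fscale_def by blast
lemma sub_eq: "fsub f g = fadd f (fscale (-1) g)"
  by (auto simp: fsub_def fadd_def fscale_def)
lemma sub_in[simp]: "f \<in> H \<Longrightarrow> g \<in> H \<Longrightarrow> fsub f g \<in> H"
  by (simp add: sub_eq)
lemma sum_in: "(\<And>k. k \<in> A \<Longrightarrow> f k \<in> H) \<Longrightarrow> (\<lambda>z. \<Sum>k\<in>A. f k z) \<in> H"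
proof (induction A rule: infinite_finite_induct)
  case (insert x F)
  have "(\<lambda>z. \<Sum>k\<in>insert x F. f k z) = fadd (f x) (\<lambda>z. \<Sum>k\<in>F. f k z)"
    using insert by (auto simp: fadd_def)
  then show ?case using insert by simp
qed auto

lemma hol: "f \<in> H \<Longrightarrow> f holomorphic_on ball 0 1"
  using hs unfolding hol_hilbert_space_def by blast
lemma outside: "f \<in> H \<Longrightarrow> z \<notin> ball 0 1 \<Longrightarrow> f z = 0"
  using hs unfolding hol_hilbert_space_def by blast

lemma ip_add: "f \<in> H \<Longrightarrow> g \<in> H \<Longrightarrow> h \<in> H \<Longrightarrow> ip (fadd f g) h = ip f h + ip g h"
  using hs unfolding hol_hilbert_space_def fadd_def by blast
lemma ip_scale: "f \<in> H \<Longrightarrow> h \<in> H \<Longrightarrow> ip (fscale c f) h = c * ip f h"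
  using hs unfolding hol_hilbert_space_def fscale_def by blast
lemma ip_sym: "f \<in> H \<Longrightarrow> g \<in> H \<Longrightarrow> ip g f = cnj (ip f g)"
  using hs unfolding hol_hilbert_space_def by blast
lemma ip_pos: "f \<in> H \<Longrightarrow> 0 \<le> Re (ip f f)"
  using hs unfolding hol_hilbert_space_def by blast
lemma ip_zero_imp: "f \<in> H \<Longrightarrow> ip f f = 0 \<Longrightarrow> f = (\<lambda>z. 0)"
  using hs unfolding hol_hilbert_space_def by blast
lemma complete: "(\<forall>n. s n \<in> H) \<Longrightarrow> (\<forall>e>0. \<exists>N. \<forall>m\<ge>N. \<forall>n\<ge>N. nrm (fsub (s m) (s n)) < e)
          \<Longrightarrow> (\<exists>f\<in>H. (\<lambda>n. nrm (fsub (s n) f)) \<longlonglongrightarrow> 0)"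
  using hs unfolding hol_hilbert_space_def fsub_def by blast

lemma ip_add2: "f \<in> H \<Longrightarrow> g \<in> H \<Longrightarrow> h \<in> H \<Longrightarrow> ip h (fadd f g) = ip h f + ip h g"
  by (simp add: ip_sym[where g=h] ip_add)
lemma ip_scale2: "f \<in> H \<Longrightarrow> h \<in> H \<Longrightarrow> ip h (fscale c f) = cnj c * ip h f"
  by (simp add: ip_sym[where g=h] ip_scale)
lemma ip_sub: "f \<in> H \<Longrightarrow> g \<in> H \<Longrightarrow> h \<in> H \<Longrightarrow> ip (fsub f g) h = ip f h - ip g h"
  by (simp add: sub_eq ip_add ip_scale)
lemma ip_sub2: "f \<in> H \<Longrightarrow> g \<in> H \<Longrightarrow> h \<in> H \<Longrightarrow> ip h (fsub f g) = ip h f - ip h g"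
  by (simp add: sub_eq ip_add2 ip_scale2)
lemma ip_zero1[simp]: "h \<in> H \<Longrightarrow> ip (\<lambda>z. 0) h = 0"
proof -
  assume h: "h \<in> H"
  have "fscale 0 h = (\<lambda>z. 0)" by (auto simp: fscale_def)
  then show ?thesis using ip_scale[OF h h, of 0] by simp
qed
lemma ip_zero2[simp]: "h \<in> H \<Longrightarrow> ip h (\<lambda>z. 0) = 0"
  using ip_sym[of h "\<lambda>z. 0"] by simp
lemma ip_sum: "(\<And>k. k \<in> A \<Longrightarrow> f k \<in> H) \<Longrightarrow> h \<in> H \<Longrightarrow> ip (\<lambda>z. \<Sum>k\<in>A. f k z) h = (\<Sum>k\<in>A. ip (f k) h)"
proof (induction A rule: infinite_finite_induct)
  case (insert x F)
  have "(\<lambda>z. \<Sum>k\<in>insert x F. f k z) = fadd (f x) (\<lambda>z. \<Sum>k\<in>F. f k z)"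
    using insert by (auto simp: fadd_def)
  then show ?case using insert by (simp add: ip_add sum_in)
qed auto

lemma ip_self_real: "f \<in> H \<Longrightarrow> ip f f = complex_of_real (Re (ip f f))"
proof -
  assume f: "f \<in> H"
  have "Im (ip f f) = Im (cnj (ip f f))" using ip_sym[OF f f] by simp
  then have "Im (ip f f) = 0" by simp
  then show ?thesis by (simp add: complex_eq_iff)
qed
lemma nrm_nonneg[simp]: "f \<in> H \<Longrightarrow> 0 \<le> nrm f" using ip_pos[of f] by (simp add: hnorm_def)
lemma nrm_sq: "f \<in> H \<Longrightarrow> (nrm f)^2 = Re (ip f f)"
  using ip_pos[of f] by (simp add: hnorm_def)
lemma ip_self: "f \<in> H \<Longrightarrow> ip f f = complex_of_real ((nrm f)^2)"
  using ip_self_real nrm_sq by simp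
lemma nrm_zero_imp: "f \<in> H \<Longrightarrow> nrm f = 0 \<Longrightarrow> f = (\<lambda>z. 0)"
  using ip_self ip_zero_imp by fastforce
lemma nrm_zero[simp]: "nrm (\<lambda>z. 0) = 0"
  by (simp add: hnorm_def)
lemma nrm_scale: "f \<in> H \<Longrightarrow> nrm (fscale c f) = cmod c * nrm f"
proof -
  assume f: "f \<in> H"
  have "ip (fscale c f) (fscale c f) = c * cnj c * ip f f"
    using f by (simp add: ip_scale ip_scale2)
  also have "\<dots> = complex_of_real ((cmod c)^2 * (nrm f)^2)"
    using f by (simp add: ip_self complex_norm_square[symmetric])
  finally have "(nrm (fscale c f))^2 = ((cmod c) * nrm f)^2"
    using f nrm_sq[of "fscale c f"] by (simp add: power_mult_distrib)
  then show ?thesis using f by (simp add: power2_eq_iff_nonneg)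
qed

lemma cauchy_schwarz: assumes f: "f \<in> H" and g: "g \<in> H"
  shows "cmod (ip f g) \<le> nrm f * nrm g"
proof (cases "nrm g = 0")
  case True
  then show ?thesis using nrm_zero_imp[OF g] f by simp
next
  case False
  define a where "a = ip f g"
  define n where "n = (nrm g)^2"
  have n0: "n > 0" using False g unfolding n_def by (simp add: order_less_le)
  define t where "t = a / complex_of_real n"
  have fg: "ip g f = cnj a" using ip_sym[OF f g] unfolding a_def by simp
  have gg: "ip g g = complex_of_real n" using ip_self[OF g] unfolding n_def by simp
  have tg: "fscale t g \<in> H" using g by simp
  have "ip (fsub f (fscale t g)) (fsub f (fscale t g))
      = ip f f - ip f (fscale t g) - (ip (fscale t g) f - ip (fscale t g) (fscale t g))"
    using f tg by (simp add: ip_sub ip_sub2)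
  also have "\<dots> = ip f f - cnj t * a - (t * cnj a - t * cnj t * complex_of_real n)"
    using f g by (simp add: ip_scale ip_scale2 fg gg a_def)
  also have "\<dots> = ip f f - a * cnj a / complex_of_real n"
    using n0 unfolding t_def by (simp add: field_simps)
  also have "\<dots> = ip f f - complex_of_real ((cmod a)^2 / n)"
    by (simp add: complex_norm_square[symmetric])
  finally have "ip (fsub f (fscale t g)) (fsub f (fscale t g)) = ip f f - complex_of_real ((cmod a)^2 / n)" .
  then have "Re (ip (fsub f (fscale t g)) (fsub f (fscale t g))) = (nrm f)^2 - (cmod a)^2 / n"
    using f by (simp add: ip_self)
  then have "0 \<le> (nrm f)^2 - (cmod a)^2 / n"
    using ip_pos[of "fsub f (fscale t g)"] f tg by simp
  then have "(cmod a)^2 \<le> (nrm f)^2 * n"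
    using n0 by (simp add: field_simps)
  then have "(cmod a)^2 \<le> (nrm f * nrm g)^2"
    unfolding n_def by (simp add: power_mult_distrib)
  then show ?thesis unfolding a_def
    by (meson nrm_nonneg f g mult_nonneg_nonneg power2_le_imp_le)
qed

lemma nrm_add: assumes f: "f \<in> H" and g: "g \<in> H"
  shows "nrm (fadd f g) \<le> nrm f + nrm g"
proof -
  have fg: "fadd f g \<in> H" using f g by simp
  have "ip (fadd f g) (fadd f g) = ip f (fadd f g) + ip g (fadd f g)"
    using f g fg by (rule ip_add)
  also have "\<dots> = (ip f f + ip f g) + (ip g f + ip g g)"
    using f g by (simp only: ip_add2)
  finally have e: "ip (fadd f g) (fadd f g) = (ip f f + ip f g) + (ip g f + ip g g)" .
  have "Re (ip g f) = Re (ip f g)" using ip_sym[OF f g] by simp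
  then have "(nrm (fadd f g))^2 = (nrm f)^2 + (nrm g)^2 + 2 * Re (ip f g)"
    using nrm_sq[OF fg] nrm_sq[OF f] nrm_sq[OF g] e by simp
  also have "\<dots> \<le> (nrm f)^2 + (nrm g)^2 + 2 * (nrm f * nrm g)"
    using cauchy_schwarz[OF f g] complex_Re_le_cmod[of "ip f g"] by linarith
  also have "\<dots> = (nrm f + nrm g)^2" by (simp add: power2_sum)
  finally show ?thesis
    by (meson nrm_nonneg f g add_nonneg_nonneg power2_le_imp_le)
qed

lemma nrm_neg: "f \<in> H \<Longrightarrow> nrm (fscale (-1) f) = nrm f"
  by (simp add: nrm_scale)

lemma nrm_sub: assumes f: "f \<in> H" and g: "g \<in> H"
  shows "nrm (fsub f g) \<le> nrm f + nrm g"
  using nrm_add[OF f scale_in[OF g, of "-1"]] nrm_neg[OF g] by (simp add: sub_eq)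

lemma nrm_sub_comm: assumes f: "f \<in> H" and g: "g \<in> H"
  shows "nrm (fsub f g) = nrm (fsub g f)"
proof -
  have "fsub f g = fscale (-1) (fsub g f)" by (auto simp: fsub_def fscale_def)
  then show ?thesis using nrm_neg f g by simp
qed

lemma nrm_tri: assumes f: "f \<in> H" and g: "g \<in> H" and h: "h \<in> H"
  shows "nrm (fsub f h) \<le> nrm (fsub f g) + nrm (fsub g h)"
proof -
  have "fsub f h = fadd (fsub f g) (fsub g h)" by (auto simp: fsub_def fadd_def)
  then show ?thesis using nrm_add[of "fsub f g" "fsub g h"] f g h by simp
qed

lemma nrm_sum: "(\<And>k. k \<in> A \<Longrightarrow> f k \<in> H) \<Longrightarrow> nrm (\<lambda>z. \<Sum>k\<in>A. f k z) \<le> (\<Sum>k\<in>A. nrm (f k))"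
proof (induction A rule: infinite_finite_induct)
  case (insert x F)
  have "(\<lambda>z. \<Sum>k\<in>insert x F. f k z) = fadd (f x) (\<lambda>z. \<Sum>k\<in>F. f k z)"
    using insert by (auto simp: fadd_def)
  then have "nrm (\<lambda>z. \<Sum>k\<in>insert x F. f k z) \<le> nrm (f x) + nrm (\<lambda>z. \<Sum>k\<in>F. f k z)"
    using insert nrm_add[of "f x" "\<lambda>z. \<Sum>k\<in>F. f k z"] sum_in[of F f] by simp
  then show ?case using insert by simp
qed auto

lemma nrm_diff_ge: assumes f: "f \<in> H" and g: "g \<in> H"
  shows "nrm f - nrm g \<le> nrm (fsub f g)"
proof -
  have "f = fadd (fsub f g) g" by (auto simp: fsub_def fadd_def)
  then have "nrm f \<le> nrm (fsub f g) + nrm g" using nrm_add[of "fsub f g" g] f g by simp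
  then show ?thesis by simp
qed

end

context hs
begin

definition hd :: "(complex \<Rightarrow> complex) \<Rightarrow> (complex \<Rightarrow> complex) \<Rightarrow> real" where
  "hd f g = (if f \<in> H \<and> g \<in> H then nrm (fsub f g) else 0)"

lemma metric: "Metric_space H hd"
proof
  fix x y z
  show "0 \<le> hd x y" by (simp add: hd_def)
  show "hd x y = hd y x" by (auto simp: hd_def nrm_sub_comm)
  show "x \<in> H \<Longrightarrow> y \<in> H \<Longrightarrow> hd x y = 0 \<longleftrightarrow> x = y"
  proof -
    assume x: "x \<in> H" and y: "y \<in> H"
    show "hd x y = 0 \<longleftrightarrow> x = y"
    proof
      assume "hd x y = 0"
      then have "fsub x y = (\<lambda>z. 0)" using x y nrm_zero_imp[of "fsub x y"] by (simp add: hd_def)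
      then show "x = y" by (metis (no_types) fsub_def eq_iff_diff_eq_0 ext)
    next
      assume "x = y"
      then have "fsub x y = (\<lambda>z. 0)" by (simp add: fsub_def)
      then show "hd x y = 0" by (simp add: hd_def)
    qed
  qed
  show "x \<in> H \<Longrightarrow> y \<in> H \<Longrightarrow> z \<in> H \<Longrightarrow> hd x z \<le> hd x y + hd y z"
    by (simp add: hd_def nrm_tri)
qed

lemma ubp:
  fixes p :: "'i \<Rightarrow> (complex \<Rightarrow> complex) \<Rightarrow> real"
  assumes sub: "\<And>i f g. f \<in> H \<Longrightarrow> g \<in> H \<Longrightarrow> p i (fadd f g) \<le> p i f + p i g"
    and hom: "\<And>i c f. f \<in> H \<Longrightarrow> p i (fscale c f) = cmod c * p i f"
    and bnd: "\<And>i. \<exists>L. \<forall>f\<in>H. p i f \<le> L * nrm f"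
    and pw: "\<And>f. f \<in> H \<Longrightarrow> \<exists>B. \<forall>i. p i f \<le> B"
  shows "\<exists>C. \<forall>i. \<forall>f\<in>H. p i f \<le> C * nrm f"
proof -
  interpret M: Metric_space H hd by (rule metric)
  define F where "F m = {f \<in> H. \<forall>i. p i f \<le> real m}" for m :: nat
  have p0: "p i (\<lambda>z. 0) = 0" for i
  proof -
    have "fscale 0 (\<lambda>z. 0) = (\<lambda>z. 0)" by (simp add: fscale_def)
    then show ?thesis using hom[of "\<lambda>z. 0" i 0] by simp
  qed
  have psub: "p i f - p i g \<le> p i (fsub f g)" if "f \<in> H" "g \<in> H" for i f g
  proof -
    have "f = fadd (fsub f g) g" by (auto simp: fsub_def fadd_def)
    then have "p i f \<le> p i (fsub f g) + p i g" using sub[of "fsub f g" g i] that by simp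
    then show ?thesis by simp
  qed
  have closed: "closedin M.mtopology (F m)" for m
    unfolding M.closedin_metric
  proof (intro conjI allI impI)
    show "F m \<subseteq> H" by (auto simp: F_def)
    fix x assume x: "x \<in> H - F m"
    then obtain i where i: "p i x > real m" by (auto simp: F_def not_le)
    obtain L where L: "\<forall>f\<in>H. p i f \<le> L * nrm f" using bnd by blast
    define r where "r = (p i x - real m) / (\<bar>L\<bar> + 1)"
    have r0: "r > 0" using i unfolding r_def by (simp add: add_pos_nonneg)
    have "disjnt (F m) (M.mball x r)"
    proof (unfold disjnt_def, rule equals0I)
      fix y assume y: "y \<in> F m \<inter> M.mball x r"
      then have yH: "y \<in> H" and py: "p i y \<le> real m" and d: "nrm (fsub x y) < r"
        using x by (auto simp: F_def hd_def)
      have "p i (fsub x y) \<le> L * nrm (fsub x y)" using L x yH by simp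
      also have "\<dots> \<le> (\<bar>L\<bar> + 1) * nrm (fsub x y)"
        using x yH by (intro mult_right_mono) auto
      also have "\<dots> < (\<bar>L\<bar> + 1) * r" using d by (intro mult_strict_left_mono) auto
      also have "\<dots> = p i x - real m" unfolding r_def by (simp add: add_pos_nonneg)
      finally have "p i (fsub x y) < p i x - real m" .
      moreover have "p i x - p i y \<le> p i (fsub x y)" using psub x yH by simp
      ultimately show False using py by simp
    qed
    then show "\<exists>r>0. disjnt (F m) (M.mball x r)" using r0 by blast
  qed
  have union: "\<Union>(range F) = H"
  proof
    show "\<Union>(range F) \<subseteq> H" by (auto simp: F_def)
    show "H \<subseteq> \<Union>(range F)"
    proof
      fix f assume f: "f \<in> H"
      obtain B where B: "\<forall>i. p i f \<le> B" using pw[OF f] by blast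
      obtain m where "B \<le> real m" using real_arch_simple by blast
      then have "f \<in> F m" using B f by (auto simp: F_def intro: order_trans)
      then show "f \<in> \<Union>(range F)" by blast
    qed
  qed
  have compl: "M.mcomplete"
    unfolding M.mcomplete_def
  proof (intro allI impI)
    fix \<sigma> assume c: "M.MCauchy \<sigma>"
    then have sH: "\<forall>n. \<sigma> n \<in> H" by (auto simp: M.MCauchy_def)
    have "\<forall>e>0. \<exists>N. \<forall>m\<ge>N. \<forall>n\<ge>N. nrm (fsub (\<sigma> m) (\<sigma> n)) < e"
    proof -
      have "\<forall>e>0. \<exists>N. \<forall>n n'. N \<le> n \<longrightarrow> N \<le> n' \<longrightarrow> nrm (fsub (\<sigma> n) (\<sigma> n')) < e"
        using c sH unfolding M.MCauchy_def hd_def by simp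
      then show ?thesis by blast
    qed
    then obtain f where f: "f \<in> H" "(\<lambda>n. nrm (fsub (\<sigma> n) f)) \<longlonglongrightarrow> 0"
      using complete sH by blast
    have "limitin M.mtopology \<sigma> f sequentially"
      unfolding M.limitin_metric
    proof (intro conjI allI impI)
      show "f \<in> H" by fact
      fix e :: real assume e: "e > 0"
      from f(2) have "eventually (\<lambda>n. dist (nrm (fsub (\<sigma> n) f)) 0 < e) sequentially"
        using e tendstoD by blast
      then show "eventually (\<lambda>n. \<sigma> n \<in> H \<and> hd (\<sigma> n) f < e) sequentially"
        by eventually_elim (use sH f in \<open>auto simp: hd_def\<close>)
    qed
    then show "\<exists>x. limitin M.mtopology \<sigma> x sequentially" by blast
  qed
  have "\<exists>m. M.mtopology interior_of (F m) \<noteq> {}"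
  proof (rule ccontr)
    assume "\<not> ?thesis"
    then have "M.mtopology interior_of \<Union>(range F) = {}"
      by (intro M.metric_Baire_category_alt compl) (auto simp: closed)
    then have e: "M.mtopology interior_of H = {}" using union by simp
    have "M.mtopology interior_of H = H"
      using interior_of_topspace[of M.mtopology] unfolding M.topspace_mtopology .
    then show False using e zero_in by blast
  qed
  then obtain m x0 where x0: "x0 \<in> M.mtopology interior_of (F m)" by blast
  have op: "openin M.mtopology (M.mtopology interior_of (F m))" by simp
  have oi: "M.mtopology interior_of (F m) \<subseteq> H \<and> (\<forall>x. x \<in> M.mtopology interior_of (F m) \<longrightarrow> (\<exists>r>0. M.mball x r \<subseteq> M.mtopology interior_of (F m)))"
    using op unfolding M.openin_mtopology .
  have "\<exists>r>0. M.mball x0 r \<subseteq> M.mtopology interior_of (F m)"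
    using spec[OF conjunct2[OF oi], of x0] x0 by (rule mp)
  then obtain r where r: "r > 0" "M.mball x0 r \<subseteq> M.mtopology interior_of (F m)"
    by (elim exE conjE)
  have sub1: "M.mball x0 r \<subseteq> F m" using r(2) interior_of_subset[of M.mtopology "F m"] by (rule order_trans)
  have x0H: "x0 \<in> H" using conjunct1[OF oi] x0 by (rule subsetD)
  have "x0 \<in> M.mball x0 r" using x0H r(1) by simp
  then have x0F: "x0 \<in> F m" using sub1 by (rule rev_subsetD)
  show ?thesis
  proof (intro exI allI ballI)
    fix i f assume f: "f \<in> H"
    show "p i f \<le> (4 * real m / r) * nrm f"
    proof (cases "nrm f = 0")
      case True
      then show ?thesis using nrm_zero_imp[OF f] p0 by simp
    next
      case False
      then have nf: "nrm f > 0" using f nrm_nonneg[OF f] by linarith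
      define c where "c = r / (2 * nrm f)"
      have c0: "c > 0" using nf r by (simp add: c_def)
      define y where "y = fadd x0 (fscale (complex_of_real c) f)"
      have yH: "y \<in> H" using x0H f by (simp add: y_def)
      have "fsub x0 y = fscale (complex_of_real (- c)) f"
        by (auto simp: y_def fsub_def fadd_def fscale_def)
      then have "hd x0 y = c * nrm f"
        using yH x0H f c0 by (simp add: hd_def nrm_scale)
      also have "\<dots> = r / 2" using nf by (simp add: c_def)
      finally have "y \<in> M.mball x0 r" using r x0H yH by simp
      then have "y \<in> F m" using sub1 by blast
      then have py: "p i y \<le> real m" by (simp add: F_def)
      have px0: "p i x0 \<le> real m" using x0F by (simp add: F_def)
      have "fscale (complex_of_real c) f = fsub y x0" by (auto simp: y_def fsub_def fadd_def fscale_def)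
      then have "c * p i f \<le> p i (fsub y x0)" using hom[OF f, of i "complex_of_real c"] c0 by simp
      also have "\<dots> \<le> p i y + p i (fscale (-1) x0)"
        using sub[OF yH scale_in[OF x0H]] by (simp add: sub_eq)
      also have "\<dots> \<le> 2 * real m" using hom[OF x0H, of i "-1"] py px0 by simp
      finally have "c * p i f \<le> 2 * real m" .
      then have "p i f \<le> 2 * real m / c" using c0 by (simp add: field_simps)
      also have "\<dots> = (4 * real m / r) * nrm f" using r nf by (simp add: c_def field_simps)
      finally show ?thesis .
    qed
  qed
qed

end

lemma lim_inv1: "(\<lambda>N. 1 / (real N + 1)) \<longlonglongrightarrow> 0"
  using LIMSEQ_inverse_real_of_nat by (simp add: inverse_eq_divide add.commute)

context hs
begin

lemma parallelogram: assumes f: "f \<in> H" and g: "g \<in> H"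
  shows "(nrm (fadd f g))^2 + (nrm (fsub f g))^2 = 2 * (nrm f)^2 + 2 * (nrm g)^2"
proof -
  have fg: "fadd f g \<in> H" "fsub f g \<in> H" using f g by auto
  have e1: "ip (fadd f g) (fadd f g) = (ip f f + ip f g) + (ip g f + ip g g)"
    using ip_add[OF f g fg(1)] ip_add2[OF f g f] ip_add2[OF f g g] by simp
  have e2: "ip (fsub f g) (fsub f g) = (ip f f - ip f g) - (ip g f - ip g g)"
    using ip_sub[OF f g fg(2)] ip_sub2[OF f g f] ip_sub2[OF f g g] by simp
  have "ip (fadd f g) (fadd f g) + ip (fsub f g) (fsub f g) = 2 * ip f f + 2 * ip g g"
    unfolding e1 e2 by simp
  then have "Re (ip (fadd f g) (fadd f g)) + Re (ip (fsub f g) (fsub f g)) = 2 * Re (ip f f) + 2 * Re (ip g g)"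
    by (metis Re_complex_of_real complex_Re_numeral plus_complex.sel(1) times_complex.sel(1)
        Im_complex_of_real mult_zero_left diff_zero complex_Im_numeral)
  then show ?thesis using nrm_sq f g fg by simp
qed

lemma riesz:
  fixes \<phi> :: "(complex \<Rightarrow> complex) \<Rightarrow> complex"
  assumes ladd: "\<And>f g. f \<in> H \<Longrightarrow> g \<in> H \<Longrightarrow> \<phi> (fadd f g) = \<phi> f + \<phi> g"
    and lscale: "\<And>c f. f \<in> H \<Longrightarrow> \<phi> (fscale c f) = c * \<phi> f"
    and bnd: "\<And>f. f \<in> H \<Longrightarrow> cmod (\<phi> f) \<le> L * nrm f"
  shows "\<exists>g\<in>H. \<forall>h\<in>H. \<phi> h = ip h g"
proof (cases "\<forall>h\<in>H. \<phi> h = 0")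
  case True
  then show ?thesis using zero_in by (intro bexI[of _ "\<lambda>z. 0"]) auto
next
  case False
  then obtain u where u: "u \<in> H" "\<phi> u \<noteq> 0" by blast
  have lsub: "\<phi> (fsub f g) = \<phi> f - \<phi> g" if "f \<in> H" "g \<in> H" for f g
    using that by (simp add: sub_eq ladd lscale)
  define A where "A = {h \<in> H. \<phi> h = 1}"
  define d where "d = Inf (nrm ` A)"
  have u1: "fscale (1 / \<phi> u) u \<in> A" using u by (simp add: A_def lscale)
  have Ane: "nrm ` A \<noteq> {}" using u1 by blast
  have bdd: "bdd_below (nrm ` A)" by (rule bdd_belowI[of _ 0]) (auto simp: A_def)
  have dle: "d \<le> nrm h" if "h \<in> A" for h
    unfolding d_def using bdd that by (simp add: cInf_lower)
  have d0: "0 \<le> d" unfolding d_def using Ane by (intro cInf_greatest) (auto simp: A_def)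
  have "\<exists>h\<in>A. nrm h < d + 1 / (real n + 1)" for n
  proof -
    have "Inf (nrm ` A) < d + 1 / (real n + 1)" unfolding d_def by (simp add: add_pos_nonneg)
    then obtain x where "x \<in> nrm ` A" "x < d + 1 / (real n + 1)"
      using cInf_lessD[OF Ane] by blast
    then show ?thesis by blast
  qed
  then obtain s where sA: "\<And>n. s n \<in> A" and sn: "\<And>n. nrm (s n) < d + 1 / (real n + 1)"
    by metis
  have sH: "\<And>n. s n \<in> H" using sA by (simp add: A_def)
  define e where "e = (\<lambda>N::nat. 4 * (2 * d * (1 / (real N + 1)) + (1 / (real N + 1))^2))" 
  have e_lim: "e \<longlonglongrightarrow> 0"
  proof -
    have "e \<longlonglongrightarrow> 4 * (2 * d * 0 + 0^2)"
      unfolding e_def by (intro tendsto_intros lim_inv1)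
    then show ?thesis by simp
  qed
  have cauchy_bound: "(nrm (fsub (s m) (s n)))^2 \<le> e N" if "N \<le> m" "N \<le> n" for m n N
  proof -
    define mid where "mid = fscale (1/2) (fadd (s m) (s n))"
    have midH: "mid \<in> H" using sH by (simp add: mid_def)
    have "\<phi> mid = 1" using sA sH by (simp add: mid_def lscale ladd A_def)
    then have "d \<le> nrm mid" using dle midH by (simp add: A_def)
    moreover have "nrm mid = nrm (fadd (s m) (s n)) / 2"
      using sH by (simp add: mid_def nrm_scale)
    ultimately have "2 * d \<le> nrm (fadd (s m) (s n))" by simp
    then have "(2 * d)^2 \<le> (nrm (fadd (s m) (s n)))^2"
      using d0 by (intro power_mono) auto
    then have sq1: "4 * d^2 \<le> (nrm (fadd (s m) (s n)))^2"
      by (simp add: power_mult_distrib)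
    have en: "1 / (real n + 1) \<le> 1 / (real N + 1)" "1 / (real m + 1) \<le> 1 / (real N + 1)"
      using that by (auto simp: frac_le)
    have "(nrm (s n))^2 \<le> (d + 1 / (real N + 1))^2"
      using sn[of n] en sH[of n] by (intro power_mono) auto
    moreover have "(nrm (s m))^2 \<le> (d + 1 / (real N + 1))^2"
      using sn[of m] en sH[of m] by (intro power_mono) auto
    moreover have "(nrm (fadd (s m) (s n)))^2 + (nrm (fsub (s m) (s n)))^2 = 2 * (nrm (s m))^2 + 2 * (nrm (s n))^2"
      using parallelogram sH by simp
    moreover have "e N = 4 * (d + 1 / (real N + 1))^2 - 4 * d^2"
      unfolding e_def by (simp add: power2_sum algebra_simps)
    ultimately show ?thesis using sq1 by linarith
  qed
  have "\<forall>\<epsilon>>0. \<exists>N. \<forall>m\<ge>N. \<forall>n\<ge>N. nrm (fsub (s m) (s n)) < \<epsilon>"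
  proof (intro allI impI)
    fix \<epsilon> :: real assume \<epsilon>: "\<epsilon> > 0"
    then have "\<epsilon>^2 > 0" by simp
    then obtain N where N: "\<forall>k\<ge>N. norm (e k - 0) < \<epsilon>^2" using e_lim LIMSEQ_D by blast
    have "nrm (fsub (s m) (s n)) < \<epsilon>" if "m \<ge> N" "n \<ge> N" for m n
    proof -
      have "(nrm (fsub (s m) (s n)))^2 \<le> e N" using cauchy_bound that by blast
      also have "\<dots> < \<epsilon>^2" using N by auto
      finally show ?thesis using \<epsilon> by (meson power_less_imp_less_base less_imp_le)
    qed
    then show "\<exists>N. \<forall>m\<ge>N. \<forall>n\<ge>N. nrm (fsub (s m) (s n)) < \<epsilon>" by blast
  qed
  then obtain h0 where h0: "h0 \<in> H" "(\<lambda>n. nrm (fsub (s n) h0)) \<longlonglongrightarrow> 0"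
    using complete sH by blast
  have ph0: "\<phi> h0 = 1"
  proof (rule ccontr)
    assume ne: "\<phi> h0 \<noteq> 1"
    define \<delta> where "\<delta> = cmod (1 - \<phi> h0)"
    have \<delta>: "\<delta> > 0" using ne by (simp add: \<delta>_def)
    have "(\<lambda>n. (\<bar>L\<bar> + 1) * nrm (fsub (s n) h0)) \<longlonglongrightarrow> (\<bar>L\<bar> + 1) * 0"
      using h0 by (intro tendsto_intros)
    then obtain n where n: "norm ((\<bar>L\<bar> + 1) * nrm (fsub (s n) h0) - 0) < \<delta>"
      using LIMSEQ_D \<delta> by fastforce
    have "\<delta> = cmod (\<phi> (fsub (s n) h0))" using lsub sH h0 sA by (simp add: \<delta>_def A_def)
    also have "\<dots> \<le> L * nrm (fsub (s n) h0)" using bnd sH h0 by simp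
    also have "\<dots> \<le> (\<bar>L\<bar> + 1) * nrm (fsub (s n) h0)" using sH h0 by (intro mult_right_mono) auto
    finally show False using n sH h0 by simp
  qed
  have h0A: "h0 \<in> A" using h0 ph0 by (simp add: A_def)
  have nh0: "nrm h0 \<le> d"
  proof -
    have "(\<lambda>n. d + 1 / (real n + 1) + nrm (fsub (s n) h0)) \<longlonglongrightarrow> d + 0 + 0"
      using h0 by (intro tendsto_intros lim_inv1)
    then have lim: "(\<lambda>n. d + 1 / (real n + 1) + nrm (fsub (s n) h0)) \<longlonglongrightarrow> d" by simp
    have "nrm h0 \<le> d + 1 / (real n + 1) + nrm (fsub (s n) h0)" for n
    proof -
      have "nrm h0 \<le> nrm (s n) + nrm (fsub h0 (s n))"
        using nrm_diff_ge[OF h0(1) sH[of n]] by simp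
      then show ?thesis using sn[of n] nrm_sub_comm[OF h0(1) sH[of n]] by simp
    qed
    then show ?thesis by (intro LIMSEQ_le_const[OF lim]) blast
  qed
  have orth: "ip v h0 = 0" if v: "v \<in> H" "\<phi> v = 0" for v
  proof (rule ccontr)
    assume a0: "ip v h0 \<noteq> 0"
    define a where "a = ip v h0"
    define \<epsilon> where "\<epsilon> = 1 / ((nrm v)^2 + 1)"
    have p: "(nrm v)^2 + 1 > 0" by (simp add: add_nonneg_pos)
    have \<epsilon>0: "\<epsilon> > 0" using p by (simp add: \<epsilon>_def)
    have \<epsilon>v: "\<epsilon> * (nrm v)^2 < 1" unfolding \<epsilon>_def using p by (simp add: field_simps)
    define t where "t = - complex_of_real \<epsilon> * cnj a"
    define w where "w = fadd h0 (fscale t v)"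
    have wH: "w \<in> H" using h0 v by (simp add: w_def)
    have tv: "fscale t v \<in> H" using v by simp
    have "\<phi> w = 1" using h0 v ph0 by (simp add: w_def ladd lscale)
    then have "nrm h0 \<le> nrm w" using nh0 dle wH by (force simp: A_def)
    then have le: "(nrm h0)^2 \<le> (nrm w)^2" using h0 by (simp add: power_mono)
    have "ip w w = ip h0 h0 + ip h0 (fscale t v) + (ip (fscale t v) h0 + ip (fscale t v) (fscale t v))"
      unfolding w_def using ip_add[OF h0(1) tv add_in[OF h0(1) tv]] ip_add2[OF h0(1) tv h0(1)] ip_add2[OF h0(1) tv tv] by (simp add: ac_simps)
    also have "\<dots> = ip h0 h0 + cnj t * cnj a + (t * a + t * cnj t * ip v v)"
      using h0 v ip_sym[OF v(1) h0(1)] by (simp add: ip_scale ip_scale2 a_def)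
    also have "\<dots> = ip h0 h0 - 2 * complex_of_real \<epsilon> * (a * cnj a) + (complex_of_real \<epsilon>)^2 * (a * cnj a) * ip v v"
      unfolding t_def by (simp add: algebra_simps power2_eq_square)
    also have "\<dots> = complex_of_real ((nrm h0)^2 - 2 * \<epsilon> * (cmod a)^2 + \<epsilon>^2 * (cmod a)^2 * (nrm v)^2)"
      using h0 v by (simp add: ip_self complex_norm_square[symmetric])
    finally have "(nrm w)^2 = (nrm h0)^2 - 2 * \<epsilon> * (cmod a)^2 + \<epsilon>^2 * (cmod a)^2 * (nrm v)^2"
      using nrm_sq[OF wH] by simp
    with le have "0 \<le> \<epsilon> * (cmod a)^2 * (\<epsilon> * (nrm v)^2 - 2)" by (simp add: algebra_simps power2_eq_square)
    moreover have "\<epsilon> * (cmod a)^2 > 0" using a0 \<epsilon>0 by (simp add: a_def)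
    moreover have "\<epsilon> * (nrm v)^2 - 2 < 0" using \<epsilon>v by simp
    ultimately show False by (simp add: mult_pos_neg zero_le_mult_iff)
  qed
  have hn: "nrm h0 > 0"
  proof -
    have "h0 \<noteq> (\<lambda>z. 0)"
    proof
      assume "h0 = (\<lambda>z. 0)"
      then have "\<phi> h0 = \<phi> (fscale 0 h0)" by (simp add: fscale_def)
      then show False using lscale[OF h0(1), of 0] ph0 by simp
    qed
    then show ?thesis using nrm_zero_imp[OF h0(1)] nrm_nonneg[OF h0(1)] by force
  qed
  define g where "g = fscale (complex_of_real (1 / (nrm h0)^2)) h0"
  show ?thesis
  proof (intro bexI ballI)
    show "g \<in> H" using h0 by (simp add: g_def)
    fix h assume h: "h \<in> H"
    define v where "v = fsub h (fscale (\<phi> h) h0)"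
    have vH: "v \<in> H" using h h0 by (simp add: v_def)
    have "\<phi> v = 0" using h h0 ph0 by (simp add: v_def lsub lscale)
    then have "ip v h0 = 0" using orth vH by blast
    then have "ip h h0 = \<phi> h * ip h0 h0" using h h0 by (simp add: v_def ip_sub ip_scale)
    then have "ip h h0 = \<phi> h * complex_of_real ((nrm h0)^2)" using ip_self[OF h0(1)] by simp
    then show "\<phi> h = ip h g" using h h0 hn by (simp add: g_def ip_scale2 field_simps)
  qed
qed

end

lemma ball_eq_nhds0: "eventually (\<lambda>w. w \<in> ball (0::complex) 1) (nhds 0)"
  by (rule eventually_nhds_in_open) auto

locale rk = hs +
  fixes K :: "complex \<Rightarrow> complex \<Rightarrow> complex"
  assumes kern: "is_repr_kernel H ip K"
begin

lemma kw_in: "w \<in> ball 0 1 \<Longrightarrow> (\<lambda>z. K z w) \<in> H"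
  using kern unfolding is_repr_kernel_def by blast
lemma repr: "h \<in> H \<Longrightarrow> w \<in> ball 0 1 \<Longrightarrow> h w = ip h (\<lambda>z. K z w)"
  using kern unfolding is_repr_kernel_def by blast

lemma eval_bound: "h \<in> H \<Longrightarrow> w \<in> ball 0 1 \<Longrightarrow> cmod (h w) \<le> nrm h * nrm (\<lambda>z. K z w)"
  using repr cauchy_schwarz kw_in by metis

lemma eval_unif: "\<exists>S. \<forall>w\<in>cball 0 (1/2). \<forall>h\<in>H. cmod (h w) \<le> S * nrm h"
proof -
  define p where "p w h = (if w \<in> cball (0::complex) (1/2) then cmod (h w) else 0)" for w and h :: "complex \<Rightarrow> complex"
  have cb: "cball (0::complex) (1/2) \<subseteq> ball 0 1" by auto
  have "\<exists>C. \<forall>w. \<forall>f\<in>H. p w f \<le> C * nrm f"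
  proof (rule ubp)
    fix w f g assume "f \<in> H" "g \<in> H"
    show "p w (fadd f g) \<le> p w f + p w g" by (simp add: p_def fadd_def norm_triangle_ineq)
  next
    fix w c f assume "f \<in> H"
    show "p w (fscale c f) = cmod c * p w f" by (simp add: p_def fscale_def norm_mult)
  next
    fix w
    show "\<exists>L. \<forall>f\<in>H. p w f \<le> L * nrm f"
    proof (cases "w \<in> cball 0 (1/2)")
      case True
      then have "w \<in> ball 0 1" using cb by blast
      then show ?thesis using eval_bound True by (intro exI[of _ "nrm (\<lambda>z. K z w)"]) (simp add: p_def mult.commute)
    next
      case False
      then show ?thesis by (intro exI[of _ 0]) (simp add: p_def)
    qed
  next
    fix f assume f: "f \<in> H"
    have "continuous_on (ball 0 1) f" using hol[OF f] holomorphic_on_imp_continuous_on by blast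
    then have "continuous_on (cball 0 (1/2)) f" using cb continuous_on_subset by blast
    then have "compact (f ` cball 0 (1/2))" by (intro compact_continuous_image) auto
    then obtain B where "\<forall>x\<in>f ` cball 0 (1/2). norm x \<le> B" using compact_imp_bounded bounded_iff by metis
    then show "\<exists>B. \<forall>w. p w f \<le> B"
    proof (intro exI allI)
      fix w
      assume B: "\<forall>x\<in>f ` cball 0 (1/2). norm x \<le> B"
      show "p w f \<le> max B 0"
      proof (cases "w \<in> cball 0 (1/2)")
        case True
        then have "cmod (f w) \<le> B" using B by blast
        then show ?thesis using True by (simp add: p_def)
      qed (simp add: p_def)
    qed
  qed
  then obtain C where C: "\<forall>w. \<forall>f\<in>H. p w f \<le> C * nrm f" by blast
  show ?thesis
  proof (intro exI[of _ C] ballI)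
    fix w h assume w: "w \<in> cball (0::complex) (1/2)" and h: "h \<in> H"
    have "p w h \<le> C * nrm h" using C h by blast
    then show "cmod (h w) \<le> C * nrm h" using w by (simp add: p_def)
  qed
qed

lemma tc_add: "f \<in> H \<Longrightarrow> g \<in> H \<Longrightarrow> taylor_coeff (fadd f g) j = taylor_coeff f j + taylor_coeff g j"
  unfolding taylor_coeff_def fadd_def
  by (subst higher_deriv_add[of f "ball 0 1" g]) (auto simp: hol add_divide_distrib)

lemma tc_scale: "f \<in> H \<Longrightarrow> taylor_coeff (fscale c f) j = c * taylor_coeff f j"
  unfolding taylor_coeff_def fscale_def
  by (subst higher_deriv_cmult[of f "ball 0 1"]) (auto simp: hol)

lemma tc_sub: "f \<in> H \<Longrightarrow> g \<in> H \<Longrightarrow> taylor_coeff (fsub f g) j = taylor_coeff f j - taylor_coeff g j"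
  by (simp add: sub_eq tc_add tc_scale)

lemma tc_bound: "\<exists>L. \<forall>h\<in>H. cmod (taylor_coeff h j) \<le> L * nrm h"
proof -
  obtain S where S: "\<forall>w\<in>cball 0 (1/2). \<forall>h\<in>H. cmod (h w) \<le> S * nrm h" using eval_unif by blast
  have "cmod (taylor_coeff h j) \<le> (2^j * S) * nrm h" if h: "h \<in> H" for h
  proof -
    have cb: "cball (0::complex) (1/2) \<subseteq> ball 0 1" by auto
    have "continuous_on (ball 0 1) h" using hol[OF h] holomorphic_on_imp_continuous_on by blast
    then have c: "continuous_on (cball 0 (1/2)) h" using cb continuous_on_subset by blast
    have ho: "h holomorphic_on ball 0 (1/2)" using hol[OF h] by (rule holomorphic_on_subset) auto
    have "norm ((deriv ^^ j) h 0) \<le> fact j * (S * nrm h) / (1/2)^j"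
      by (rule Cauchy_inequality[OF ho c]) (use S h in auto)
    then show ?thesis
      by (simp add: taylor_coeff_def norm_divide field_simps)
  qed
  then show ?thesis by blast
qed

lemma kder_repr: "kder K j \<in> H \<and> (\<forall>h\<in>H. taylor_coeff h j = ip h (kder K j))"
proof -
  obtain L where L: "\<forall>h\<in>H. cmod (taylor_coeff h j) \<le> L * nrm h" using tc_bound by blast
  obtain g where g: "g \<in> H" "\<forall>h\<in>H. taylor_coeff h j = ip h g"
    using riesz[of "\<lambda>h. taylor_coeff h j" L] tc_add tc_scale L by blast
  have "g = kder K j"
  proof
    fix z
    show "g z = kder K j z"
    proof (cases "z \<in> ball 0 1")
      case True
      have kz: "(\<lambda>u. K u z) \<in> H" using kw_in True by blast
      have ev: "eventually (\<lambda>w. cnj (K z w) = K w z) (nhds 0)"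
        using ball_eq_nhds0
      proof eventually_elim
        case (elim w)
        have kw: "(\<lambda>u. K u w) \<in> H" using kw_in elim by blast
        have "K z w = ip (\<lambda>u. K u w) (\<lambda>u. K u z)" using repr[OF kw True] by simp
        moreover have "K w z = ip (\<lambda>u. K u z) (\<lambda>u. K u w)" using repr[OF kz elim] by simp
        ultimately show ?case using ip_sym[OF kw kz] by simp
      qed
      have "g z = ip g (\<lambda>u. K u z)" using repr[OF g(1) True] .
      also have "\<dots> = cnj (ip (\<lambda>u. K u z) g)" using ip_sym[OF kz g(1)] by simp
      also have "\<dots> = cnj (taylor_coeff (\<lambda>u. K u z) j)" using g(2) kz by simp
      also have "\<dots> = cnj ((deriv ^^ j) (\<lambda>w. cnj (K z w)) 0) / fact j"
        unfolding taylor_coeff_def using higher_deriv_cong_ev[OF ev refl, of j]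
        by (simp add: complex_cnj_divide)
      finally show ?thesis by (simp add: kder_def)
    next
      case False
      have "g z = 0" using outside[OF g(1) False] .
      moreover have ev: "eventually (\<lambda>w. cnj (K z w) = 0) (nhds 0)"
        using ball_eq_nhds0
      proof eventually_elim
        case (elim w)
        show ?case using outside[OF kw_in[OF elim] False] by simp
      qed
      have "(deriv ^^ j) (\<lambda>w. cnj (K z w)) 0 = (deriv ^^ j) (\<lambda>w. 0) 0"
        by (rule higher_deriv_cong_ev[OF ev refl])
      ultimately show ?thesis by (simp add: kder_def)
    qed
  qed
  then show ?thesis using g by simp
qed

lemma key_bound:
  assumes C: "C \<ge> 0" and dj: "dmon j \<in> H"
    and b: "\<And>h. h \<in> H \<Longrightarrow> cmod (taylor_coeff h j) * nrm (dmon j) \<le> C * nrm h"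
  shows "nrm (dmon j) * nrm (kder K j) \<le> C"
proof -
  have kH: "kder K j \<in> H" and kr: "\<And>h. h \<in> H \<Longrightarrow> taylor_coeff h j = ip h (kder K j)"
    using kder_repr by auto
  have "taylor_coeff (kder K j) j = complex_of_real ((nrm (kder K j))^2)"
    using kr[OF kH] ip_self[OF kH] by simp
  then have "(nrm (kder K j))^2 * nrm (dmon j) \<le> C * nrm (kder K j)"
    using b[OF kH] by (simp add: norm_power)
  then have "nrm (kder K j) * (nrm (dmon j) * nrm (kder K j)) \<le> nrm (kder K j) * C"
    by (simp add: power2_eq_square algebra_simps)
  then show ?thesis
    using C nrm_nonneg[OF kH] by (cases "nrm (kder K j) = 0") (auto simp: mult_le_cancel_left)
qed

end

context
  fixes \<alpha> :: real
  assumes \<alpha>: "\<alpha> \<ge> 0"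
begin

definition Ac :: "nat \<Rightarrow> real" where "Ac k = ((real k + \<alpha>) gchoose k)"
definition bb :: "nat \<Rightarrow> real" where "bb m = (-1)^m * ((\<alpha> + 1) gchoose m)"

lemma Ac_Suc: "Ac (Suc k) = Ac k * ((real k + \<alpha> + 1) / (real k + 1))"
  unfolding Ac_def using gbinomial_rec[of "real k + \<alpha>" k] by (simp add: add_ac)

lemma Ac_ge1: "Ac k \<ge> 1"
proof (induction k)
  case 0 then show ?case by (simp add: Ac_def)
next
  case (Suc k)
  have "1 \<le> (real k + \<alpha> + 1) / (real k + 1)" using \<alpha> by simp
  then have "1 * 1 \<le> Ac k * ((real k + \<alpha> + 1) / (real k + 1))"
    using Suc by (intro mult_mono) auto
  then show ?case by (simp add: Ac_Suc)
qed

lemma Ac_mono: "k \<le> n \<Longrightarrow> Ac k \<le> Ac n"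
proof (induction n rule: dec_induct)
  case (step n)
  have "1 \<le> (real n + \<alpha> + 1) / (real n + 1)" using \<alpha> by simp
  then have "Ac n * 1 \<le> Ac n * ((real n + \<alpha> + 1) / (real n + 1))"
    using Ac_ge1[of n] by (intro mult_left_mono) auto
  then show ?case using step by (simp add: Ac_Suc)
qed simp

lemma Ac_harm: "Ac n \<le> exp (\<alpha> * harm n)"
proof (induction n)
  case 0 then show ?case by (simp add: Ac_def harm_def)
next
  case (Suc n)
  have "(real n + \<alpha> + 1) / (real n + 1) = 1 + \<alpha> / (real n + 1)" by (simp add: field_simps)
  also have "\<dots> \<le> exp (\<alpha> / (real n + 1))" by (rule exp_ge_add_one_self)
  finally have r: "(real n + \<alpha> + 1) / (real n + 1) \<le> exp (\<alpha> / (real n + 1))" .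
  have "Ac (Suc n) \<le> exp (\<alpha> * harm n) * exp (\<alpha> / (real n + 1))"
    unfolding Ac_Suc using Suc Ac_ge1[of n] r \<alpha> by (intro mult_mono) auto
  also have "\<dots> = exp (\<alpha> * harm (Suc n))"
    by (simp add: harm_Suc exp_add[symmetric] algebra_simps inverse_eq_divide add_ac)
  finally show ?case .
qed

lemma harm_le_ln: "n \<ge> 1 \<Longrightarrow> harm n \<le> ln (real n) + (1::real)"
  using euler_mascheroni_sequence_decreasing[of 1 n] by (simp add: harm_def)

lemma Ac_powr: "n \<ge> 1 \<Longrightarrow> Ac n \<le> exp \<alpha> * real n powr \<alpha>"
proof -
  assume n: "n \<ge> 1"
  have "Ac n \<le> exp (\<alpha> * harm n)" by (rule Ac_harm)
  also have "\<dots> \<le> exp (\<alpha> * (ln (real n) + 1))"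
    using harm_le_ln[OF n] \<alpha> by (simp add: mult_left_mono)
  also have "\<dots> = exp \<alpha> * real n powr \<alpha>"
    using n by (simp add: powr_def exp_add[symmetric] algebra_simps)
  finally show ?thesis .
qed

lemma conv_identity: "(\<Sum>k=0..N. bb (N - k) * Ac k) = (if N = 0 then 1 else 0)"
proof -
  have V: "(\<Sum>k=0..N. ((- (\<alpha> + 1)) gchoose k) * ((\<alpha> + 1) gchoose (N - k))) = (- (\<alpha> + 1) + (\<alpha> + 1)) gchoose N"
    by (rule gbinomial_Vandermonde)
  have m: "((- (\<alpha> + 1)) gchoose k) = (-1)^k * Ac k" for k
    unfolding Ac_def gbinomial_minus by (simp add: algebra_simps)
  have "(\<Sum>k=0..N. bb (N - k) * Ac k) = (\<Sum>k=0..N. (-1)^N * (((- (\<alpha> + 1)) gchoose k) * ((\<alpha> + 1) gchoose (N - k))))"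
  proof (rule sum.cong)
    fix k assume k: "k \<in> {0..N}"
    have "N = (N - k) + k" using k by simp
    then have "(-1::real)^N = (-1)^((N-k) + k)" by (rule arg_cong)
    then have "(-1::real)^N = (-1)^(N-k) * (-1)^k" by (simp only: power_add)
    then show "bb (N - k) * Ac k = (-1)^N * (((- (\<alpha> + 1)) gchoose k) * ((\<alpha> + 1) gchoose (N - k)))"
      unfolding m bb_def by (simp add: algebra_simps)
  qed simp
  also have "\<dots> = (-1)^N * ((- (\<alpha> + 1) + (\<alpha> + 1)) gchoose N)"
    unfolding sum_distrib_left[symmetric] V ..
  also have "\<dots> = (if N = 0 then 1 else 0)" by (simp add: gbinomial_0_left)
  finally show ?thesis .
qed

lemma gchoose_pos: "j \<le> k \<Longrightarrow> ((real k + \<alpha>) gchoose j) > 0"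
proof -
  assume jk: "j \<le> k"
  have "fact j * ((real k + \<alpha>) gchoose j) = (\<Prod>i = 0..<j. real k + \<alpha> - real i)"
    by (rule gbinomial_mult_fact)
  also have "\<dots> > 0" using jk \<alpha> by (intro prod_pos) auto
  finally show ?thesis by (simp add: zero_less_mult_iff)
qed

lemma W_Ac: "j \<le> k \<Longrightarrow> real (k choose j) / ((real k + \<alpha>) gchoose j) * Ac k = Ac (k - j)"
proof -
  assume jk: "j \<le> k"
  have tr: "((real k + \<alpha>) gchoose k) * (of_nat k gchoose j) = ((real k + \<alpha>) gchoose j) * ((real k + \<alpha> - of_nat j) gchoose (k - j))"
    by (rule gbinomial_trinomial_revision[OF jk])
  have e1: "real k + \<alpha> - of_nat j = real (k - j) + \<alpha>" using jk by (simp add: of_nat_diff)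
  have e2: "(of_nat k gchoose j :: real) = real (k choose j)" by (rule binomial_gbinomial[symmetric])
  from tr have e3: "Ac k * real (k choose j) = ((real k + \<alpha>) gchoose j) * Ac (k - j)"
    unfolding Ac_def e1 e2 .
  define G where "G = ((real k + \<alpha>) gchoose j)"
  have G: "G \<noteq> 0" using gchoose_pos[OF jk] unfolding G_def by simp
  have "real (k choose j) / G * Ac k = (Ac k * real (k choose j)) / G" by simp
  also have "\<dots> = G * Ac (k - j) / G" using e3 unfolding G_def by simp
  also have "\<dots> = Ac (k - j)" using G by simp
  finally show ?thesis unfolding G_def .
qed

lemma gchoose_Suc_rec: "(a gchoose Suc m) = (a gchoose m) * (a - real m) / (real m + 1)"
  using gbinomial_mult_1[of a m] by (simp add: field_simps)

definition uu :: "nat \<Rightarrow> real" where "uu m = \<bar>(\<alpha> + 1) gchoose m\<bar>"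

lemma uu_Suc: "uu (Suc m) = uu m * \<bar>\<alpha> + 1 - real m\<bar> / (real m + 1)"
  unfolding uu_def gchoose_Suc_rec by (simp add: abs_mult abs_divide)

lemma vv_dec: assumes m: "real m \<ge> \<alpha> + 1"
  shows "uu (Suc m) * (real (Suc m) * real (Suc m + 1)) \<le> uu m * (real m * real (m + 1))"
proof -
  have "uu (Suc m) * (real (Suc m) * real (Suc m + 1)) = uu m * ((real m - \<alpha> - 1) * (real m + 2))"
    using m by (simp add: uu_Suc field_simps)
  also have "\<dots> \<le> uu m * (real m * real (m + 1))"
  proof (rule mult_left_mono)
    have "(real m - \<alpha> - 1) * (real m + 2) \<le> (real m - 1) * (real m + 2)"
      using \<alpha> by (intro mult_right_mono) auto
    also have "\<dots> \<le> real m * real (m + 1)" by (simp add: algebra_simps)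
    finally show "(real m - \<alpha> - 1) * (real m + 2) \<le> real m * real (m + 1)" .
  qed (simp add: uu_def)
  finally show ?thesis .
qed

lemma tele_aux: fixes x :: real assumes "x + 1 \<noteq> 0" "x + 2 \<noteq> 0"
  shows "1 - 1 / (x + 1) + 1 / ((x + 1) * (x + 2)) = 1 - 1 / (x + 2)"
proof -
  have "1 / (x + 1) - 1 / (x + 2) = (1 * (x + 2) - 1 * (x + 1)) / ((x + 1) * (x + 2))"
    using assms by (rule diff_frac_eq)
  also have "\<dots> = 1 / ((x + 1) * (x + 2))" by simp
  finally have "1 / ((x + 1) * (x + 2)) = 1 / (x + 1) - 1 / (x + 2)" by simp
  then show ?thesis by simp
qed

lemma tele: "(\<Sum>m=1..n. 1 / (real m * real (m + 1))) = 1 - 1 / (real n + 1)"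
proof (induction n)
  case (Suc n)
  have "(\<Sum>m=1..Suc n. 1 / (real m * real (m + 1))) = (\<Sum>m=1..n. 1 / (real m * real (m + 1))) + 1 / (real (Suc n) * real (Suc n + 1))"
    by (rule sum.cl_ivl_Suc[THEN trans]) simp
  also have "\<dots> = 1 - 1 / (real n + 1) + 1 / ((real n + 1) * (real n + 2))" using Suc by (simp add: algebra_simps)
  also have "\<dots> = 1 - 1 / (real n + 2)" by (rule tele_aux) (simp_all add: add_nonneg_pos)
  also have "\<dots> = 1 - 1 / (real (Suc n) + 1)" by simp
  finally show ?case .
qed simp

lemma uu_sum_bound: "\<exists>B. \<forall>n. (\<Sum>m=0..n. uu m) \<le> B"
proof -
  define k0 where "k0 = nat \<lceil>\<alpha> + 1\<rceil>"
  have k0: "real k0 \<ge> \<alpha> + 1" unfolding k0_def using \<alpha> by linarith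
  define vv where "vv m = uu m * (real m * real (m + 1))" for m
  define E where "E = (\<Sum>i=0..k0. vv i)"
  have vv0: "vv m \<ge> 0" for m by (simp add: vv_def uu_def)
  have vk: "vv m \<le> vv k0" if "k0 \<le> m" for m
    using that
  proof (induction m rule: dec_induct)
    case (step m)
    have "real m \<ge> \<alpha> + 1" using step k0 by linarith
    then show ?case using vv_dec[of m] step unfolding vv_def by linarith
  qed simp
  have vE: "vv m \<le> E" for m
  proof (cases "m \<le> k0")
    case True
    then show ?thesis unfolding E_def using vv0 by (intro member_le_sum) auto
  next
    case False
    then have "vv m \<le> vv k0" using vk by simp
    also have "\<dots> \<le> E" unfolding E_def using vv0 by (intro member_le_sum) auto
    finally show ?thesis .
  qed
  have um: "uu m \<le> E * (1 / (real m * real (m + 1)))" if "m \<ge> 1" for m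
  proof -
    have pos: "real m * real (m + 1) > 0" using that by simp
    have "uu m * (real m * real (m + 1)) \<le> E" using vE[of m] unfolding vv_def .
    then have "uu m \<le> E / (real m * real (m + 1))" using pos by (simp only: pos_le_divide_eq)
    then show ?thesis by simp
  qed
  have "(\<Sum>m=0..n. uu m) \<le> uu 0 + E" for n
  proof -
    have "(\<Sum>m=0..n. uu m) = uu 0 + (\<Sum>m=1..n. uu m)"
      by (simp add: sum.atLeast_Suc_atMost)
    also have "(\<Sum>m=1..n. uu m) \<le> (\<Sum>m=1..n. E * (1 / (real m * real (m + 1))))"
      using um by (intro sum_mono) auto
    also have "\<dots> = E * (1 - 1 / (real n + 1))" unfolding sum_distrib_left[symmetric] tele ..
    also have "\<dots> \<le> E" using vE[of 0] vv0[of 0] by (simp add: algebra_simps)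
    finally show ?thesis by simp
  qed
  then show ?thesis by blast
qed

lemma main_comb: "\<exists>B\<ge>0. \<forall>n\<ge>1. (\<Sum>k=0..n. \<bar>bb (n - k)\<bar> * Ac k) \<le> B * real n powr \<alpha>"
proof -
  obtain B where B: "\<And>n. (\<Sum>m=0..n. uu m) \<le> B" using uu_sum_bound by blast
  have B0: "B \<ge> 0" using B[of 0] by (simp add: uu_def)
  show ?thesis
  proof (intro exI[of _ "B * exp \<alpha>"] conjI allI impI)
    show "B * exp \<alpha> \<ge> 0" using B0 by simp
    fix n :: nat assume n: "n \<ge> 1"
    have "(\<Sum>k=0..n. \<bar>bb (n - k)\<bar> * Ac k) \<le> (\<Sum>k=0..n. uu (n - k) * Ac n)"
    proof (rule sum_mono)
      fix k assume k: "k \<in> {0..n}"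
      have "\<bar>bb (n - k)\<bar> = uu (n - k)" by (simp add: bb_def uu_def abs_mult power_abs)
      moreover have "Ac k \<le> Ac n" using k by (intro Ac_mono) simp
      moreover have "uu (n - k) \<ge> 0" by (simp add: uu_def)
      ultimately show "\<bar>bb (n - k)\<bar> * Ac k \<le> uu (n - k) * Ac n" by (simp add: mult_left_mono)
    qed
    also have "\<dots> = (\<Sum>k=0..n. uu (n - k)) * Ac n" by (simp add: sum_distrib_right)
    also have "(\<Sum>k=0..n. uu (n - k)) = (\<Sum>k=0..n. uu k)"
      using sum.atLeastAtMost_rev[of uu 0 n] by simp
    also have "(\<Sum>k=0..n. uu k) * Ac n \<le> B * (exp \<alpha> * real n powr \<alpha>)"
      using B[of n] Ac_powr[OF n] Ac_ge1[of n] B0 by (intro mult_mono) (auto simp: uu_def intro: sum_nonneg)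
    finally show "(\<Sum>k=0..n. \<bar>bb (n - k)\<bar> * Ac k) \<le> B * exp \<alpha> * real n powr \<alpha>" by (simp add: mult.assoc)
  qed
qed

end

lemma sum_swap_tri:
  fixes f :: "nat \<Rightarrow> nat \<Rightarrow> 'a::comm_monoid_add"
  shows "(\<Sum>k=0..n. \<Sum>j=0..k. f k j) = (\<Sum>j=0..n. \<Sum>k=j..n. f k j)"
proof -
  have "(\<Sum>k=0..n. \<Sum>j=0..k. f k j) = (\<Sum>k\<in>{0..n}. \<Sum>j\<in>{j. j \<in> {0..n} \<and> j \<le> k}. f k j)"
    by (intro sum.cong) auto
  also have "\<dots> = (\<Sum>j\<in>{0..n}. \<Sum>k\<in>{k. k \<in> {0..n} \<and> k \<ge> j}. f k j)"
    by (rule sum.swap_restrict) auto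
  also have "\<dots> = (\<Sum>j=0..n. \<Sum>k=j..n. f k j)"
    by (intro sum.cong) auto
  finally show ?thesis .
qed

locale rkd = rk +
  assumes dm: "\<And>j. dmon j \<in> H"
begin

definition W :: "real \<Rightarrow> nat \<Rightarrow> nat \<Rightarrow> complex" where
  "W \<alpha> n j = complex_of_real (real (n choose j) / ((real n + \<alpha>) gchoose j))"

lemma ces_eq: "cesaro \<alpha> n h = (\<lambda>z. \<Sum>j\<in>{0..n}. fscale (W \<alpha> n j * taylor_coeff h j) (dmon j) z)"
  by (rule ext) (simp add: cesaro_def W_def fscale_def dmon_def)

lemma ces_in: "cesaro \<alpha> n h \<in> H"
  unfolding ces_eq by (rule sum_in) (simp add: dm)

lemma ces_add: "f \<in> H \<Longrightarrow> g \<in> H \<Longrightarrow> cesaro \<alpha> n (fadd f g) = fadd (cesaro \<alpha> n f) (cesaro \<alpha> n g)"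
  by (rule ext) (simp add: cesaro_def fadd_def tc_add[unfolded fadd_def] ring_distribs sum.distrib)

lemma ces_scale: "f \<in> H \<Longrightarrow> cesaro \<alpha> n (fscale c f) = fscale c (cesaro \<alpha> n f)"
  by (rule ext) (simp add: cesaro_def fscale_def tc_scale[unfolded fscale_def] sum_distrib_left algebra_simps)

lemma ces_bnd: "\<exists>L. \<forall>h\<in>H. nrm (cesaro \<alpha> n h) \<le> L * nrm h"
proof -
  have "\<forall>j. \<exists>L. \<forall>h\<in>H. cmod (taylor_coeff h j) \<le> L * nrm h" using tc_bound by blast
  then obtain Lf where Lf: "\<And>j h. h \<in> H \<Longrightarrow> cmod (taylor_coeff h j) \<le> Lf j * nrm h" by metis
  have "nrm (cesaro \<alpha> n h) \<le> (\<Sum>j=0..n. cmod (W \<alpha> n j) * Lf j * nrm (dmon j)) * nrm h" if h: "h \<in> H" for h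
  proof -
    have "nrm (cesaro \<alpha> n h) \<le> (\<Sum>j\<in>{0..n}. nrm (fscale (W \<alpha> n j * taylor_coeff h j) (dmon j)))"
      unfolding ces_eq by (rule nrm_sum) (simp add: dm)
    also have "\<dots> = (\<Sum>j\<in>{0..n}. cmod (W \<alpha> n j) * cmod (taylor_coeff h j) * nrm (dmon j))"
      by (simp add: nrm_scale dm norm_mult)
    also have "\<dots> \<le> (\<Sum>j\<in>{0..n}. cmod (W \<alpha> n j) * (Lf j * nrm h) * nrm (dmon j))"
      using Lf[OF h] dm by (intro sum_mono mult_right_mono mult_left_mono) (auto simp: nrm_nonneg)
    also have "\<dots> = (\<Sum>j=0..n. cmod (W \<alpha> n j) * Lf j * nrm (dmon j)) * nrm h"
      by (subst sum_distrib_right) (simp add: mult_ac)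
    finally show ?thesis .
  qed
  then show ?thesis by blast
qed

lemma unif_bound:
  assumes hyp: "(\<forall>h\<in>H. \<forall>g\<in>H. (\<lambda>n. ip (cesaro \<alpha> n h) g) \<longlonglongrightarrow> ip h g)
         \<or> (\<forall>h\<in>H. (\<lambda>n. hnorm ip (\<lambda>z. cesaro \<alpha> n h z - h z)) \<longlonglongrightarrow> 0)"
  shows "\<exists>M. \<forall>n. \<forall>h\<in>H. nrm (cesaro \<alpha> n h) \<le> M * nrm h"
proof (rule ubp)
  fix n f g assume "f \<in> H" "g \<in> H"
  then show "nrm (cesaro \<alpha> n (fadd f g)) \<le> nrm (cesaro \<alpha> n f) + nrm (cesaro \<alpha> n g)"
    by (simp add: ces_add nrm_add ces_in)
next
  fix n c f assume "f \<in> H"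
  then show "nrm (cesaro \<alpha> n (fscale c f)) = cmod c * nrm (cesaro \<alpha> n f)"
    by (simp add: ces_scale nrm_scale ces_in)
next
  fix n show "\<exists>L. \<forall>f\<in>H. nrm (cesaro \<alpha> n f) \<le> L * nrm f" by (rule ces_bnd)
next
  fix h assume h: "h \<in> H"
  show "\<exists>B. \<forall>n. nrm (cesaro \<alpha> n h) \<le> B"
  proof (cases "\<forall>h\<in>H. (\<lambda>n. hnorm ip (\<lambda>z. cesaro \<alpha> n h z - h z)) \<longlonglongrightarrow> 0")
    case True
    then have "(\<lambda>n. nrm (fsub (cesaro \<alpha> n h) h)) \<longlonglongrightarrow> 0" using h by (simp add: fsub_def)
    then have "Bseq (\<lambda>n. nrm (fsub (cesaro \<alpha> n h) h))" by (intro convergent_imp_Bseq convergentI)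
    then obtain B where B: "\<And>n. norm (nrm (fsub (cesaro \<alpha> n h) h)) \<le> B" by (auto simp: Bseq_def)
    have "nrm (cesaro \<alpha> n h) \<le> B + nrm h" for n
    proof -
      have "nrm (cesaro \<alpha> n h) - nrm h \<le> nrm (fsub (cesaro \<alpha> n h) h)" using nrm_diff_ge ces_in h by blast
      also have "\<dots> \<le> B" using B[of n] by simp
      finally show ?thesis by simp
    qed
    then show ?thesis by blast
  next
    case False
    then have weak: "\<forall>g\<in>H. (\<lambda>n. ip (cesaro \<alpha> n h) g) \<longlonglongrightarrow> ip h g" using hyp h by blast
    define q where "q n g = cmod (ip g (cesaro \<alpha> n h))" for n g
    have "\<exists>C. \<forall>n. \<forall>g\<in>H. q n g \<le> C * nrm g"
    proof (rule ubp)
      fix n f g assume "f \<in> H" "g \<in> H"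
      then show "q n (fadd f g) \<le> q n f + q n g" by (simp add: q_def ip_add ces_in norm_triangle_ineq)
    next
      fix n c f assume "f \<in> H"
      then show "q n (fscale c f) = cmod c * q n f" by (simp add: q_def ip_scale ces_in norm_mult)
    next
      fix n show "\<exists>L. \<forall>f\<in>H. q n f \<le> L * nrm f"
        using cauchy_schwarz ces_in by (intro exI[of _ "nrm (cesaro \<alpha> n h)"]) (simp add: q_def mult.commute)
    next
      fix g assume g: "g \<in> H"
      then have "convergent (\<lambda>n. ip (cesaro \<alpha> n h) g)" using weak by (auto intro: convergentI)
      then have "Bseq (\<lambda>n. ip (cesaro \<alpha> n h) g)" by (rule convergent_imp_Bseq)
      then obtain B where B: "\<And>n. norm (ip (cesaro \<alpha> n h) g) \<le> B" by (auto simp: Bseq_def)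
      have "q n g \<le> B" for n using B[of n] ip_sym[OF ces_in g] by (simp add: q_def)
      then show "\<exists>B. \<forall>n. q n g \<le> B" by blast
    qed
    then obtain C where C: "\<And>n g. g \<in> H \<Longrightarrow> q n g \<le> C * nrm g" by blast
    have "nrm (cesaro \<alpha> n h) \<le> max C 0" for n
    proof (cases "nrm (cesaro \<alpha> n h) = 0")
      case False
      have X: "cesaro \<alpha> n h \<in> H" by (rule ces_in)
      have "(nrm (cesaro \<alpha> n h))^2 \<le> C * nrm (cesaro \<alpha> n h)"
        using C[OF X, of n] ip_self[OF X] by (simp add: q_def norm_power)
      then have "nrm (cesaro \<alpha> n h) * nrm (cesaro \<alpha> n h) \<le> C * nrm (cesaro \<alpha> n h)"
        by (simp add: power2_eq_square)
      then have "nrm (cesaro \<alpha> n h) \<le> C" using False nrm_nonneg[OF X]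
        by (simp add: mult_le_cancel_right)
      then show ?thesis by simp
    qed simp
    then show ?thesis by blast
  qed
qed

lemma term_eq:
  assumes a: "\<alpha> \<ge> 0" and jk: "j \<le> k"
  shows "complex_of_real (bb \<alpha> (n - k) * Ac \<alpha> k) * (complex_of_real (real (k choose j) / ((real k + \<alpha>) gchoose j)) * c * z ^ j)
       = complex_of_real (bb \<alpha> (n - k) * Ac \<alpha> (k - j)) * (c * z ^ j)"
proof -
  have "complex_of_real (bb \<alpha> (n - k) * Ac \<alpha> k) * (complex_of_real (real (k choose j) / ((real k + \<alpha>) gchoose j)) * c * z ^ j)
      = complex_of_real (bb \<alpha> (n - k) * (real (k choose j) / ((real k + \<alpha>) gchoose j) * Ac \<alpha> k)) * (c * z ^ j)"
    by (simp add: of_real_mult mult_ac)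
  also have "\<dots> = complex_of_real (bb \<alpha> (n - k) * Ac \<alpha> (k - j)) * (c * z ^ j)"
    using W_Ac[OF a jk] by simp
  finally show ?thesis .
qed

lemma inner_eq:
  assumes a: "\<alpha> \<ge> 0" and jn: "j \<le> n"
  shows "(\<Sum>k=j..n. bb \<alpha> (n - k) * Ac \<alpha> (k - j)) = (if j = n then 1 else 0)"
proof -
  have "(\<Sum>k=j..n. bb \<alpha> (n - k) * Ac \<alpha> (k - j)) = (\<Sum>i=0..n - j. bb \<alpha> (n - (j + i)) * Ac \<alpha> (j + i - j))"
    using sum.atLeastAtMost_shift_0[OF jn, of "\<lambda>k. bb \<alpha> (n - k) * Ac \<alpha> (k - j)"] by (simp add: comp_def)
  also have "\<dots> = (\<Sum>i=0..n - j. bb \<alpha> ((n - j) - i) * Ac \<alpha> i)"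
    by (intro sum.cong) auto
  also have "\<dots> = (if n - j = 0 then 1 else 0)" by (rule conv_identity[OF a])
  finally show ?thesis using jn by simp
qed

lemma Pn_eq:
  assumes a: "\<alpha> \<ge> 0"
  shows "fscale (taylor_coeff h n) (dmon n)
       = (\<lambda>z. \<Sum>k\<in>{0..n}. fscale (complex_of_real (bb \<alpha> (n - k) * Ac \<alpha> k)) (cesaro \<alpha> k h) z)"
proof (rule ext)
  fix z
  show "fscale (taylor_coeff h n) (dmon n) z = (\<Sum>k\<in>{0..n}. fscale (complex_of_real (bb \<alpha> (n - k) * Ac \<alpha> k)) (cesaro \<alpha> k h) z)"
  proof (cases "z \<in> ball 0 1")
    case False
    then show ?thesis by (simp add: fscale_def dmon_def cesaro_def)
  next
    case True
    have "(\<Sum>k\<in>{0..n}. fscale (complex_of_real (bb \<alpha> (n - k) * Ac \<alpha> k)) (cesaro \<alpha> k h) z)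
        = (\<Sum>k=0..n. \<Sum>j=0..k. complex_of_real (bb \<alpha> (n - k) * Ac \<alpha> k) *
             (complex_of_real (real (k choose j) / ((real k + \<alpha>) gchoose j)) * taylor_coeff h j * z ^ j))"
      using True by (simp add: fscale_def cesaro_def sum_distrib_left)
    also have "\<dots> = (\<Sum>k=0..n. \<Sum>j=0..k. complex_of_real (bb \<alpha> (n - k) * Ac \<alpha> (k - j)) * (taylor_coeff h j * z ^ j))"
      by (intro sum.cong refl term_eq[OF a]) auto
    also have "\<dots> = (\<Sum>j=0..n. \<Sum>k=j..n. complex_of_real (bb \<alpha> (n - k) * Ac \<alpha> (k - j)) * (taylor_coeff h j * z ^ j))"
      by (rule sum_swap_tri)
    also have "\<dots> = (\<Sum>j=0..n. complex_of_real (\<Sum>k=j..n. bb \<alpha> (n - k) * Ac \<alpha> (k - j)) * (taylor_coeff h j * z ^ j))"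
      by (simp add: sum_distrib_right)
    also have "\<dots> = (\<Sum>j=0..n. (if j = n then taylor_coeff h j * z ^ j else 0))"
      by (intro sum.cong refl) (simp add: inner_eq[OF a])
    also have "\<dots> = taylor_coeff h n * z ^ n" by simp
    finally show ?thesis using True by (simp add: fscale_def dmon_def)
  qed
qed

lemma coeff_bound:
  assumes a: "\<alpha> \<ge> 0" and M: "M \<ge> 0" and Mb: "\<And>n h. h \<in> H \<Longrightarrow> nrm (cesaro \<alpha> n h) \<le> M * nrm h"
    and h: "h \<in> H"
  shows "cmod (taylor_coeff h n) * nrm (dmon n) \<le> M * (\<Sum>k=0..n. \<bar>bb \<alpha> (n - k)\<bar> * Ac \<alpha> k) * nrm h"
proof -
  have "cmod (taylor_coeff h n) * nrm (dmon n) = nrm (fscale (taylor_coeff h n) (dmon n))"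
    by (simp add: nrm_scale dm)
  also have "\<dots> = nrm (\<lambda>z. \<Sum>k\<in>{0..n}. fscale (complex_of_real (bb \<alpha> (n - k) * Ac \<alpha> k)) (cesaro \<alpha> k h) z)"
    by (simp only: Pn_eq[OF a])
  also have "\<dots> \<le> (\<Sum>k\<in>{0..n}. nrm (fscale (complex_of_real (bb \<alpha> (n - k) * Ac \<alpha> k)) (cesaro \<alpha> k h)))"
    by (rule nrm_sum) (simp add: ces_in)
  also have "\<dots> = (\<Sum>k\<in>{0..n}. (\<bar>bb \<alpha> (n - k)\<bar> * Ac \<alpha> k) * nrm (cesaro \<alpha> k h))"
  proof (intro sum.cong refl)
    fix k
    have "\<bar>Ac \<alpha> k\<bar> = Ac \<alpha> k" using Ac_ge1[OF a, of k] by simp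
    then show "nrm (fscale (complex_of_real (bb \<alpha> (n - k) * Ac \<alpha> k)) (cesaro \<alpha> k h)) = (\<bar>bb \<alpha> (n - k)\<bar> * Ac \<alpha> k) * nrm (cesaro \<alpha> k h)"
      by (simp add: nrm_scale ces_in norm_mult)
  qed
  also have "\<dots> \<le> (\<Sum>k\<in>{0..n}. (\<bar>bb \<alpha> (n - k)\<bar> * Ac \<alpha> k) * (M * nrm h))"
  proof (intro sum_mono mult_left_mono)
    fix k
    show "nrm (cesaro \<alpha> k h) \<le> M * nrm h" using Mb[OF h] .
    have "0 \<le> Ac \<alpha> k" using Ac_ge1[OF a, of k] by linarith
    then show "0 \<le> \<bar>bb \<alpha> (n - k)\<bar> * Ac \<alpha> k" by simp
  qed
  also have "\<dots> = (\<Sum>k=0..n. \<bar>bb \<alpha> (n - k)\<bar> * Ac \<alpha> k) * (M * nrm h)"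
    by (rule sum_distrib_right[symmetric])
  also have "\<dots> = M * (\<Sum>k=0..n. \<bar>bb \<alpha> (n - k)\<bar> * Ac \<alpha> k) * nrm h"
    by (simp only: mult_ac)
  finally show ?thesis .
qed

end

theorem theorem6p7:
  fixes H :: "(complex \<Rightarrow> complex) set"
    and ip :: "(complex \<Rightarrow> complex) \<Rightarrow> (complex \<Rightarrow> complex) \<Rightarrow> complex"
    and K :: "complex \<Rightarrow> complex \<Rightarrow> complex"
    and \<alpha> :: real
  assumes "hol_hilbert_space H ip"
    and "norm_conv_implies_pointwise H ip"
    and "\<forall>j. dmon j \<in> H"
    and "is_repr_kernel H ip K"
    and "\<alpha> \<ge> 0"
    and "(\<forall>h\<in>H. \<forall>g\<in>H. (\<lambda>n. ip (cesaro \<alpha> n h) g) \<longlonglongrightarrow> ip h g)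
         \<or> (\<forall>h\<in>H. (\<lambda>n. hnorm ip (\<lambda>z. cesaro \<alpha> n h z - h z)) \<longlonglongrightarrow> 0)"
  shows "(\<lambda>j. hnorm ip (dmon j) * hnorm ip (kder K j)) \<in> O(\<lambda>j. real j powr \<alpha>)"
proof -
  interpret rkd H ip K
    using assms(1,3,4) by (intro rkd.intro rk.intro hs.intro rk_axioms.intro rkd_axioms.intro) auto
  have a: "\<alpha> \<ge> 0" by fact
  obtain M0 where M0: "\<forall>n. \<forall>h\<in>H. nrm (cesaro \<alpha> n h) \<le> M0 * nrm h"
    using unif_bound[OF assms(6)] by blast
  define M where "M = max M0 0"
  have M: "M \<ge> 0" by (simp add: M_def)
  have Mb: "nrm (cesaro \<alpha> n h) \<le> M * nrm h" if h: "h \<in> H" for n h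
  proof -
    have "M0 * nrm h \<le> M * nrm h" unfolding M_def using nrm_nonneg[OF h] by (intro mult_right_mono) auto
    then show ?thesis using M0 h by (meson order_trans)
  qed
  obtain B where B: "B \<ge> 0" "\<And>n. n \<ge> 1 \<Longrightarrow> (\<Sum>k=0..n. \<bar>bb \<alpha> (n - k)\<bar> * Ac \<alpha> k) \<le> B * real n powr \<alpha>"
    using main_comb[OF a] by blast
  have bound: "nrm (dmon n) * nrm (kder K n) \<le> (M * B) * real n powr \<alpha>" if n: "n \<ge> 1" for n
  proof (rule key_bound)
    show "0 \<le> M * B * real n powr \<alpha>" using M B by simp
    show "dmon n \<in> H" by (rule dm)
    fix h assume h: "h \<in> H"
    have "cmod (taylor_coeff h n) * nrm (dmon n) \<le> M * (\<Sum>k=0..n. \<bar>bb \<alpha> (n - k)\<bar> * Ac \<alpha> k) * nrm h"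
      by (rule coeff_bound[OF a M Mb h])
    also have "\<dots> \<le> M * (B * real n powr \<alpha>) * nrm h"
      using B(2)[OF n] M nrm_nonneg[OF h] by (intro mult_right_mono mult_left_mono) auto
    finally show "cmod (taylor_coeff h n) * nrm (dmon n) \<le> M * B * real n powr \<alpha> * nrm h"
      by (simp add: mult_ac)
  qed
  show ?thesis
  proof (rule bigoI[where c = "M * B"])
    show "eventually (\<lambda>j. norm (nrm (dmon j) * nrm (kder K j)) \<le> M * B * norm (real j powr \<alpha>)) at_top"
      using eventually_ge_at_top[of "1::nat"]
    proof eventually_elim
      case (elim j)
      have "kder K j \<in> H" using kder_repr by blast
      then have "norm (nrm (dmon j) * nrm (kder K j)) = nrm (dmon j) * nrm (kder K j)"
        using nrm_nonneg dm by simp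
      also have "\<dots> \<le> M * B * real j powr \<alpha>" using bound elim by simp
      finally show ?case by simp
    qed
  qed
qed

end
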